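(* Let $\Sigma\subset\mathbb{R}^n$ be an open cone with vertex at the origin $O$ and $\Omega\subset\Sigma$ a sector-like domain, with $\Gamma=\partial\Omega\cap\Sigma$ and $\Gamma_1=\partial\Omega\setminus\overline\Gamma$. Let $f$ be a smooth positive function on $\mathbb{R}^n$ which is homogeneous of degree $\alpha>0$. If $u$ is a solution of $$\Delta_f u=-1 \text{ in }\Omega,\quad u=0 \text{ on }\Gamma,\quad u_\nu=-c \text{ on }\Gamma,\quad u_\nu=0 \text{ on }\Gamma_1\setminus\{O\},$$ $$\nabla^2\log f(\nabla u,\nabla u)+\frac{\langle\nabla\log f,\nabla u\rangle^2}{\alpha}\leq0 \text{ in }\Omega,$$ for some constant $c$, then $\Delta_f\langle x,\nabla u\rangle=-2$ in $\Omega$, where $x$ is the position vector field.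
   Context: An open cone in $\mathbb{R}^n$ with vertex at the origin $O$ is $\Sigma=\{tx:\ x\in\omega,\ t\in(0,\infty)\}$ for an open connected domain $\omega\subset\mathbb{S}^{n-1}$. Given such $\Sigma$ with $\partial\Sigma\setminus\{O\}$ smooth, a bounded domain $\Omega\subset\Sigma$ is a sector-like domain if, with $\Gamma=\partial\Omega\cap\Sigma$ and $\Gamma_1=\partial\Omega\setminus\overline\Gamma$, one has $\mathcal H^{n-1}(\Gamma)>0$, $\mathcal H^{n-1}(\Gamma_1)>0$, $\Gamma$ is a smooth $(n-1)$-dimensional manifold, and $\partial\Gamma=\partial\Gamma_1\subset\partial\Omega\setminus\{O\}$ is a smooth $(n-2)$-dimensional manifold. $\nu$ is the outward unit normal to $\partial\Omega$, $u_\nu=\langle\nabla u,\nu\rangle$. The drift Laplacian is $\Delta_f=\Delta+\langle\nabla\log f,\nabla\,\cdot\,\rangle$. $f$ is homogeneous of degree $\alpha$ if $\langle\nabla f,x\rangle=\alpha f$. *)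

theory Defs
  imports "HOL-Analysis.Analysis"
begin

definition dd :: "('a::euclidean_space \<Rightarrow> real) \<Rightarrow> 'a \<Rightarrow> 'a \<Rightarrow> real" where
  "dd h v x = frechet_derivative h (at x) v"

fun Ck_on :: "nat \<Rightarrow> 'a::euclidean_space set \<Rightarrow> ('a \<Rightarrow> real) \<Rightarrow> bool" where
  "Ck_on 0 S h \<longleftrightarrow> continuous_on S h"
| "Ck_on (Suc k) S h \<longleftrightarrow> continuous_on S h \<and> (\<forall>x\<in>S. h differentiable (at x))
      \<and> (\<forall>v. Ck_on k S (dd h v))"

definition smooth_on :: "'a::euclidean_space set \<Rightarrow> ('a \<Rightarrow> real) \<Rightarrow> bool" where
  "smooth_on S h \<longleftrightarrow> (\<forall>k. Ck_on k S h)"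

definition grad :: "('a::euclidean_space \<Rightarrow> real) \<Rightarrow> 'a \<Rightarrow> 'a" where
  "grad h x = (\<Sum>b\<in>Basis. dd h b x *\<^sub>R b)"

definition hess :: "('a::euclidean_space \<Rightarrow> real) \<Rightarrow> 'a \<Rightarrow> 'a \<Rightarrow> 'a \<Rightarrow> real" where
  "hess h x v w = dd (dd h w) v x"

definition lap :: "('a::euclidean_space \<Rightarrow> real) \<Rightarrow> 'a \<Rightarrow> real" where
  "lap h x = (\<Sum>b\<in>Basis. hess h x b b)"

definition drift_lap :: "('a::euclidean_space \<Rightarrow> real) \<Rightarrow> ('a \<Rightarrow> real) \<Rightarrow> 'a \<Rightarrow> real" where
  "drift_lap f h x = lap h x + grad (\<lambda>y. ln (f y)) x \<bullet> grad h x"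

definition homogeneous_on :: "'a::euclidean_space set \<Rightarrow> real \<Rightarrow> ('a \<Rightarrow> real) \<Rightarrow> bool" where
  "homogeneous_on S \<alpha> f \<longleftrightarrow> (\<forall>x\<in>S. grad f x \<bullet> x = \<alpha> * f x)"

definition smooth_submanifold :: "nat \<Rightarrow> 'a::euclidean_space set \<Rightarrow> bool" where
  "smooth_submanifold d M \<longleftrightarrow> d \<le> DIM('a) \<and>
     (\<forall>p\<in>M. \<exists>U g. open U \<and> p \<in> U \<and> (\<forall>i<DIM('a) - d. smooth_on U (g i)) \<and>
        M \<inter> U = {x\<in>U. \<forall>i<DIM('a) - d. g i x = 0} \<and>
        (\<forall>x\<in>M \<inter> U. inj_on (\<lambda>i. grad (g i) x) {..<DIM('a) - d} \<and>
                     independent ((\<lambda>i. grad (g i) x) ` {..<DIM('a) - d})))"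

text \<open>Unnormalised s-dimensional Hausdorff outer measure (the normalising constant is
  irrelevant here since only positivity is used).\<close>
definition hausdorff_pre :: "real \<Rightarrow> real \<Rightarrow> 'a::euclidean_space set \<Rightarrow> ennreal" where
  "hausdorff_pre s \<delta> A = (INF C \<in> {C :: nat \<Rightarrow> 'a set. A \<subseteq> (\<Union>i. C i) \<and> (\<forall>i. bounded (C i) \<and> diameter (C i) \<le> \<delta>)}.
       (\<Sum>i. ennreal (diameter (C i) powr s)))"

definition hausdorff_measure :: "real \<Rightarrow> 'a::euclidean_space set \<Rightarrow> ennreal" where
  "hausdorff_measure s A = (SUP \<delta> \<in> {0<..}. hausdorff_pre s \<delta> A)"

definition open_cone :: "'a::euclidean_space set \<Rightarrow> bool" where
  "open_cone \<Sigma> \<longleftrightarrow> (\<exists>\<omega>. \<omega> \<subseteq> sphere 0 1 \<and> openin (top_of_set (sphere 0 1)) \<omega> \<and>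
      connected \<omega> \<and> \<omega> \<noteq> {} \<and> \<Sigma> = {t *\<^sub>R x | t x. x \<in> \<omega> \<and> 0 < t})"

definition Gam :: "'a::euclidean_space set \<Rightarrow> 'a set \<Rightarrow> 'a set" where
  "Gam \<Sigma> \<Omega> = frontier \<Omega> \<inter> \<Sigma>"

definition Gam1 :: "'a::euclidean_space set \<Rightarrow> 'a set \<Rightarrow> 'a set" where
  "Gam1 \<Sigma> \<Omega> = frontier \<Omega> - closure (Gam \<Sigma> \<Omega>)"

definition edge :: "'a::real_normed_vector set \<Rightarrow> 'a set" where
  "edge M = closure M - M"

definition sector_like :: "'a::euclidean_space set \<Rightarrow> 'a set \<Rightarrow> bool" where
  "sector_like \<Sigma> \<Omega> \<longleftrightarrow>
     open \<Omega> \<and> connected \<Omega> \<and> \<Omega> \<noteq> {} \<and> bounded \<Omega> \<and> \<Omega> \<subseteq> \<Sigma> \<and>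
     hausdorff_measure (real DIM('a) - 1) (Gam \<Sigma> \<Omega>) > 0 \<and>
     hausdorff_measure (real DIM('a) - 1) (Gam1 \<Sigma> \<Omega>) > 0 \<and>
     smooth_submanifold (DIM('a) - 1) (Gam \<Sigma> \<Omega>) \<and>
     edge (Gam \<Sigma> \<Omega>) = edge (Gam1 \<Sigma> \<Omega>) \<and>
     edge (Gam \<Sigma> \<Omega>) \<subseteq> frontier \<Omega> - {0} \<and>
     smooth_submanifold (DIM('a) - 2) (edge (Gam \<Sigma> \<Omega>))"

definition outward_normal :: "'a::euclidean_space set \<Rightarrow> 'a \<Rightarrow> 'a \<Rightarrow> bool" where
  "outward_normal \<Omega> p \<nu> \<longleftrightarrow> p \<in> frontier \<Omega> \<and>
     (\<exists>U g. open U \<and> p \<in> U \<and> smooth_on U g \<and> (\<forall>x\<in>U. grad g x \<noteq> 0) \<and>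
        \<Omega> \<inter> U = {x\<in>U. g x < 0} \<and> \<nu> = (1 / norm (grad g p)) *\<^sub>R grad g p)"

end

theory Submission
  imports Defs
begin


lemma dd_deriv: "h differentiable (at x) \<Longrightarrow> (h has_derivative (\<lambda>v. dd h v x)) (at x)"
  unfolding dd_def using frechet_derivative_works by blast

lemma dd_unique: "(h has_derivative D) (at x) \<Longrightarrow> dd h v x = D v"
  unfolding dd_def using frechet_derivative_at by metis

lemma dd_local:
  assumes "open S" "x \<in> S" "\<And>y. y \<in> S \<Longrightarrow> h y = k y"
  shows "dd h v x = dd k v x"
proof -
  have "(h has_derivative D) (at x) \<longleftrightarrow> (k has_derivative D) (at x)" for D
  proof
    assume "(h has_derivative D) (at x)"
    then show "(k has_derivative D) (at x)"
      by (rule has_derivative_transform_within_open[OF _ assms(1,2)]) (simp add: assms(3))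
  next
    assume "(k has_derivative D) (at x)"
    then show "(h has_derivative D) (at x)"
      by (rule has_derivative_transform_within_open[OF _ assms(1,2)]) (simp add: assms(3))
  qed
  then show ?thesis unfolding dd_def frechet_derivative_def by simp
qed

lemma grad_inner_Basis: 
  assumes c: "c \<in> Basis" shows "grad h x \<bullet> c = dd h c x"
proof -
  have "grad h x \<bullet> c = (\<Sum>b\<in>Basis. dd h b x * (b \<bullet> c))"
    unfolding grad_def by (simp add: inner_sum_left)
  also have "\<dots> = (\<Sum>b\<in>Basis. if b = c then dd h b x else 0)"
    by (rule sum.cong) (auto simp: inner_Basis c)
  also have "\<dots> = dd h c x" using c by simp
  finally show ?thesis .
qed

lemma grad_inner_grad: "grad h x \<bullet> grad k x = (\<Sum>b\<in>Basis. dd h b x * dd k b x)"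
  by (subst euclidean_inner) (rule sum.cong, auto simp: grad_inner_Basis)

lemma inner_grad_Basis: "y \<bullet> grad k y = (\<Sum>b\<in>Basis. (y \<bullet> b) * dd k b y)"
  by (subst euclidean_inner) (rule sum.cong, auto simp: grad_inner_Basis)



lemma dd_linear: "h differentiable (at y) \<Longrightarrow> linear (\<lambda>v. dd h v y)"
  using dd_deriv has_derivative_linear by blast

lemma dd_scale: "h differentiable (at y) \<Longrightarrow> dd h (c *\<^sub>R v) y = c * dd h v y"
  using linear_scale[OF dd_linear] by simp

lemma dd_add: assumes "h differentiable (at y)" shows "dd h (v + w) y = dd h v y + dd h w y"
  using linear_add[OF dd_linear[OF assms]] by simp

lemma schwarz_half:
  fixes h :: "'a::euclidean_space \<Rightarrow> real"
  assumes S: "open S" "x \<in> S" and hd: "\<forall>y\<in>S. h differentiable (at y)"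
    and dv: "dd h v differentiable (at x)" and e: "e > 0"
  shows "\<exists>d>0. \<forall>s. 0 < s \<and> s < d \<longrightarrow>
     \<bar>h (x + s *\<^sub>R v + s *\<^sub>R w) - h (x + s *\<^sub>R v) - h (x + s *\<^sub>R w) + h x - s\<^sup>2 * dd (dd h v) w x\<bar>
       \<le> 2 * e * s\<^sup>2 * (norm v + norm w + 1)"
proof -
  define K where "K = norm v + norm w + 1"
  have K: "K > 0" "K \<ge> 1" unfolding K_def by (smt (verit) norm_ge_zero)+
  let ?A = "\<lambda>a. dd (dd h v) a x"
  have Ad: "(dd h v has_derivative ?A) (at x)" using dd_deriv[OF dv] .
  have Alin: "linear ?A" using dd_linear[OF dv] .
  obtain d1 where d1: "d1 > 0" "\<forall>y. norm (y - x) < d1 \<longrightarrow>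
      norm (dd h v y - dd h v x - ?A (y - x)) \<le> e * norm (y - x)"
    using Ad e unfolding has_derivative_at_alt by blast
  obtain r where r: "r > 0" "ball x r \<subseteq> S" using S open_contains_ball by blast
  define d where "d = min d1 r / K"
  have "d > 0" unfolding d_def using d1 r K by simp
  moreover have "\<forall>s. 0 < s \<and> s < d \<longrightarrow>
     \<bar>h (x + s *\<^sub>R v + s *\<^sub>R w) - h (x + s *\<^sub>R v) - h (x + s *\<^sub>R w) + h x - s\<^sup>2 * ?A w\<bar>
       \<le> 2 * e * s\<^sup>2 * K"
  proof (intro allI impI)
    fix s :: real assume s: "0 < s \<and> s < d"
    have sK: "s * K < min d1 r" using s K unfolding d_def by (simp add: field_simps)
    have nb: "norm (t *\<^sub>R v + s *\<^sub>R w) \<le> s * K" "norm (t *\<^sub>R v) \<le> s * K"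
      if "0 \<le> t" "t \<le> s" for t
    proof -
      have "norm (t *\<^sub>R v + s *\<^sub>R w) \<le> t * norm v + s * norm w"
        using norm_triangle_ineq[of "t *\<^sub>R v" "s *\<^sub>R w"] that s by simp
      also have "\<dots> \<le> s * norm v + s * norm w" using that by (simp add: mult_right_mono)
      also have "\<dots> \<le> s * K" unfolding K_def using s by (simp add: algebra_simps)
      finally show "norm (t *\<^sub>R v + s *\<^sub>R w) \<le> s * K" .
      have "norm (t *\<^sub>R v) \<le> s * norm v" using that by (simp add: mult_right_mono)
      also have "\<dots> \<le> s * K" unfolding K_def using s by (simp add: algebra_simps)
      finally show "norm (t *\<^sub>R v) \<le> s * K" .
    qed
    have inS: "x + t *\<^sub>R v + s *\<^sub>R w \<in> S" "x + t *\<^sub>R v \<in> S"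
      if "0 \<le> t" "t \<le> s" for t
    proof -
      have "norm ((x + t *\<^sub>R v + s *\<^sub>R w) - x) < r" using nb[OF that] sK
        by (simp add: add.assoc)
      then have "dist x (x + t *\<^sub>R v + s *\<^sub>R w) < r" by (metis dist_norm dist_commute)
      then show "x + t *\<^sub>R v + s *\<^sub>R w \<in> S" using r by auto
      have "norm ((x + t *\<^sub>R v) - x) < r" using nb[OF that] sK by simp
      then have "dist x (x + t *\<^sub>R v) < r" by (metis dist_norm dist_commute)
      then show "x + t *\<^sub>R v \<in> S" using r by auto
    qed
    define \<phi> where "\<phi> = (\<lambda>t. h (x + t *\<^sub>R v + s *\<^sub>R w) - h (x + t *\<^sub>R v))"
    have der: "(\<phi> has_derivative (\<lambda>\<tau>. dd h (\<tau> *\<^sub>R v) (x + t *\<^sub>R v + s *\<^sub>R w)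
                 - dd h (\<tau> *\<^sub>R v) (x + t *\<^sub>R v))) (at t within {0..s})"
      if "0 \<le> t" "t \<le> s" for t
    proof -
      have l1: "((\<lambda>t. x + t *\<^sub>R v + s *\<^sub>R w) has_derivative (\<lambda>\<tau>. \<tau> *\<^sub>R v)) (at t within {0..s})"
        by (auto intro!: derivative_eq_intros)
      have l0: "((\<lambda>t. x + t *\<^sub>R v) has_derivative (\<lambda>\<tau>. \<tau> *\<^sub>R v)) (at t within {0..s})"
        by (auto intro!: derivative_eq_intros)
      have h1: "(h has_derivative (\<lambda>u. dd h u (x + t *\<^sub>R v + s *\<^sub>R w))) (at (x + t *\<^sub>R v + s *\<^sub>R w))"
        using dd_deriv hd inS[OF that] by blast
      have h0: "(h has_derivative (\<lambda>u. dd h u (x + t *\<^sub>R v))) (at (x + t *\<^sub>R v))"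
        using dd_deriv hd inS[OF that] by blast
      show ?thesis unfolding \<phi>_def
        by (rule has_derivative_diff[OF has_derivative_compose[OF l1 h1] has_derivative_compose[OF l0 h0]])
    qed
    obtain t where t: "t \<in> {0<..<s}" and mv: "\<phi> s - \<phi> 0 = dd h ((s - 0) *\<^sub>R v) (x + t *\<^sub>R v + s *\<^sub>R w)
                 - dd h ((s - 0) *\<^sub>R v) (x + t *\<^sub>R v)"
      using mvt_simple[of 0 s \<phi>, OF _ der] s by force
    have t0: "0 \<le> t" "t \<le> s" using t by auto
    let ?y1 = "x + t *\<^sub>R v + s *\<^sub>R w" and ?y0 = "x + t *\<^sub>R v"
    have mv2: "\<phi> s - \<phi> 0 = s * (dd h v ?y1 - dd h v ?y0)"
    proof -
      have "dd h ((s - 0) *\<^sub>R v) ?y1 = s * dd h v ?y1" using dd_scale[of h ?y1 s v] hd inS[OF t0] by simp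
      moreover have "dd h ((s - 0) *\<^sub>R v) ?y0 = s * dd h v ?y0" using dd_scale[of h ?y0 s v] hd inS[OF t0] by simp
      ultimately show ?thesis using mv by (simp add: right_diff_distrib)
    qed
    have Delta: "\<phi> s - \<phi> 0 = h (x + s *\<^sub>R v + s *\<^sub>R w) - h (x + s *\<^sub>R v) - h (x + s *\<^sub>R w) + h x"
      unfolding \<phi>_def by simp
    have e1: "\<bar>dd h v ?y1 - dd h v x - ?A (t *\<^sub>R v + s *\<^sub>R w)\<bar> \<le> e * (s * K)"
    proof -
      have "norm (?y1 - x) < d1" using nb[OF t0] sK by (simp add: add.assoc)
      then have "norm (dd h v ?y1 - dd h v x - ?A (?y1 - x)) \<le> e * norm (?y1 - x)" using d1 by blast
      also have "\<dots> \<le> e * (s * K)" using nb[OF t0] e by (simp add: add.assoc)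
      finally show ?thesis by (simp add: add.assoc)
    qed
    have e0: "\<bar>dd h v ?y0 - dd h v x - ?A (t *\<^sub>R v)\<bar> \<le> e * (s * K)"
    proof -
      have "norm (?y0 - x) < d1" using nb[OF t0] sK by simp
      then have "norm (dd h v ?y0 - dd h v x - ?A (?y0 - x)) \<le> e * norm (?y0 - x)" using d1 by blast
      also have "\<dots> \<le> e * (s * K)" using nb[OF t0] e by simp
      finally show ?thesis by simp
    qed
    have lin: "?A (t *\<^sub>R v + s *\<^sub>R w) - ?A (t *\<^sub>R v) = s * ?A w"
      using linear_add[OF Alin] linear_scale[OF Alin] by simp
    have "\<bar>dd h v ?y1 - dd h v ?y0 - s * ?A w\<bar> \<le> 2 * e * (s * K)"
      using e1 e0 lin by linarith
    then have "s * \<bar>dd h v ?y1 - dd h v ?y0 - s * ?A w\<bar> \<le> s * (2 * e * (s * K))"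
      using s by (simp add: mult_left_mono)
    moreover have "s * (dd h v ?y1 - dd h v ?y0) - s\<^sup>2 * ?A w = s * (dd h v ?y1 - dd h v ?y0 - s * ?A w)"
      by (simp add: power2_eq_square algebra_simps)
    moreover have "\<bar>s * (dd h v ?y1 - dd h v ?y0 - s * ?A w)\<bar> = s * \<bar>dd h v ?y1 - dd h v ?y0 - s * ?A w\<bar>"
      using s by (simp add: abs_mult)
    moreover have "s * (2 * e * (s * K)) = 2 * e * s\<^sup>2 * K" by (simp add: power2_eq_square)
    ultimately have "\<bar>s * (dd h v ?y1 - dd h v ?y0) - s\<^sup>2 * ?A w\<bar> \<le> 2 * e * s\<^sup>2 * K"
      by metis
    then show "\<bar>h (x + s *\<^sub>R v + s *\<^sub>R w) - h (x + s *\<^sub>R v) - h (x + s *\<^sub>R w) + h x - s\<^sup>2 * ?A w\<bar>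
       \<le> 2 * e * s\<^sup>2 * K" using mv2 Delta by simp
  qed
  ultimately show ?thesis unfolding K_def by blast
qed

lemma schwarz:
  fixes h :: "'a::euclidean_space \<Rightarrow> real"
  assumes S: "open S" "x \<in> S" and hd: "\<forall>y\<in>S. h differentiable (at y)"
    and dv: "dd h v differentiable (at x)" and dw: "dd h w differentiable (at x)"
  shows "dd (dd h v) w x = dd (dd h w) v x"
proof (rule ccontr)
  let ?A = "dd (dd h v) w x" and ?B = "dd (dd h w) v x"
  assume ne: "?A \<noteq> ?B"
  define K where "K = norm v + norm w + 1"
  have K: "K > 0" unfolding K_def by (smt (verit) norm_ge_zero)
  define e where "e = \<bar>?A - ?B\<bar> / (6 * K)"
  have e: "e > 0" unfolding e_def using ne K by simp
  obtain d1 where d1: "d1 > 0" "\<forall>s. 0 < s \<and> s < d1 \<longrightarrow>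
     \<bar>h (x + s *\<^sub>R v + s *\<^sub>R w) - h (x + s *\<^sub>R v) - h (x + s *\<^sub>R w) + h x - s\<^sup>2 * ?A\<bar>
       \<le> 2 * e * s\<^sup>2 * K"
    using schwarz_half[OF S hd dv e, of w] unfolding K_def by blast
  obtain d2 where d2: "d2 > 0" "\<forall>s. 0 < s \<and> s < d2 \<longrightarrow>
     \<bar>h (x + s *\<^sub>R w + s *\<^sub>R v) - h (x + s *\<^sub>R w) - h (x + s *\<^sub>R v) + h x - s\<^sup>2 * ?B\<bar>
       \<le> 2 * e * s\<^sup>2 * (norm w + norm v + 1)"
    using schwarz_half[OF S hd dw e, of v] by blast
  define s where "s = min d1 d2 / 2"
  have s: "0 < s" "s < d1" "s < d2" unfolding s_def using d1 d2 by auto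
  have c: "x + s *\<^sub>R w + s *\<^sub>R v = x + s *\<^sub>R v + s *\<^sub>R w" by (simp add: algebra_simps)
  have i1: "\<bar>h (x + s *\<^sub>R v + s *\<^sub>R w) - h (x + s *\<^sub>R v) - h (x + s *\<^sub>R w) + h x - s\<^sup>2 * ?A\<bar>
       \<le> 2 * e * s\<^sup>2 * K" using d1(2) s by blast
  have i2: "\<bar>h (x + s *\<^sub>R v + s *\<^sub>R w) - h (x + s *\<^sub>R w) - h (x + s *\<^sub>R v) + h x - s\<^sup>2 * ?B\<bar>
       \<le> 2 * e * s\<^sup>2 * K" using d2(2) s c unfolding K_def by (metis add.commute)
  have "\<bar>s\<^sup>2 * ?A - s\<^sup>2 * ?B\<bar> \<le> 4 * e * s\<^sup>2 * K"
    using i1 i2 by linarith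
  then have "s\<^sup>2 * \<bar>?A - ?B\<bar> \<le> s\<^sup>2 * (4 * e * K)"
  proof -
    have "\<bar>s\<^sup>2 * ?A - s\<^sup>2 * ?B\<bar> = s\<^sup>2 * \<bar>?A - ?B\<bar>"
      by (simp add: abs_mult flip: right_diff_distrib)
    then show ?thesis using \<open>\<bar>s\<^sup>2 * ?A - s\<^sup>2 * ?B\<bar> \<le> 4 * e * s\<^sup>2 * K\<close> by (simp add: mult.assoc mult.left_commute)
  qed
  then have "\<bar>?A - ?B\<bar> \<le> 4 * e * K" using s by simp
  also have "\<dots> = \<bar>?A - ?B\<bar> * (2/3)" unfolding e_def using K by simp
  finally show False using ne by simp
qed



lemma sum_Basis_delta: "(c::'a::euclidean_space) \<in> Basis \<Longrightarrow> (\<Sum>b\<in>Basis. (c \<bullet> b) * F b) = F c"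
proof -
  assume c: "c \<in> Basis"
  have "(\<Sum>b\<in>Basis. (c \<bullet> b) * F b) = (\<Sum>b\<in>Basis. if c = b then F b else 0)"
    by (rule sum.cong) (auto simp: inner_Basis c)
  then show ?thesis using c by simp
qed

lemma differentiable_local:
  assumes "open S" "x \<in> S" "\<And>y. y \<in> S \<Longrightarrow> h y = k y" "k differentiable (at x)"
  shows "h differentiable (at x)"
proof -
  from assms(4) obtain D where "(k has_derivative D) (at x)" unfolding differentiable_def by blast
  then have "(h has_derivative D) (at x)"
    by (rule has_derivative_transform_within_open[OF _ assms(1,2)]) (simp add: assms(3))
  then show ?thesis unfolding differentiable_def by blast
qed

lemma radial_hasderiv:
  fixes F :: "'a::euclidean_space \<Rightarrow> 'a \<Rightarrow> real"
  assumes "\<forall>b\<in>Basis. F b differentiable (at y)"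
  shows "((\<lambda>y. \<Sum>b\<in>Basis. (y \<bullet> b) * F b y) has_derivative
           (\<lambda>a. \<Sum>b\<in>Basis. (y \<bullet> b) * dd (F b) a y + (a \<bullet> b) * F b y)) (at y)"
proof -
  have "((\<lambda>y. (y \<bullet> b) * F b y) has_derivative (\<lambda>a. (y \<bullet> b) * dd (F b) a y + (a \<bullet> b) * F b y)) (at y)"
    if b: "b \<in> Basis" for b
  proof -
    have i: "((\<lambda>y. y \<bullet> b) has_derivative (\<lambda>a. a \<bullet> b)) (at y)"
      by (rule bounded_linear_imp_has_derivative) (rule bounded_linear_inner_left)
    have f: "(F b has_derivative (\<lambda>a. dd (F b) a y)) (at y)" using dd_deriv assms b by blast
    show ?thesis using has_derivative_mult[OF i f] .
  qed
  then show ?thesis by (rule has_derivative_sum)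
qed

lemma radial_dd:
  fixes F :: "'a::euclidean_space \<Rightarrow> 'a \<Rightarrow> real"
  assumes "\<forall>b\<in>Basis. F b differentiable (at y)" "c \<in> Basis"
  shows "dd (\<lambda>y. \<Sum>b\<in>Basis. (y \<bullet> b) * F b y) c y = F c y + (\<Sum>b\<in>Basis. (y \<bullet> b) * dd (F b) c y)"
  using dd_unique[OF radial_hasderiv[OF assms(1)]] sum_Basis_delta[OF assms(2), of "\<lambda>b. F b y"]
  by (simp add: sum.distrib)

lemma alg:
  fixes M N :: "'b \<Rightarrow> 'b \<Rightarrow> real"
  assumes "finite B" "\<forall>b c. M b c = M c b" "\<forall>b c. N b c = N c b"
    "\<forall>c\<in>B. Lc c + (\<Sum>b\<in>B. xb b * N b c) = 0" "lapu + (\<Sum>c\<in>B. Lc c * Uc c) = -1"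
  shows "(2 * lapu + (\<Sum>b\<in>B. xb b * - (\<Sum>c\<in>B. N c b * Uc c + Lc c * M c b)))
     + (\<Sum>c\<in>B. Lc c * (Uc c + (\<Sum>b\<in>B. xb b * M b c))) = -2"
proof -
  have s1: "(\<Sum>b\<in>B. xb b * - (\<Sum>c\<in>B. N c b * Uc c + Lc c * M c b))
     = - (\<Sum>c\<in>B. Uc c * (\<Sum>b\<in>B. xb b * N b c)) - (\<Sum>c\<in>B. Lc c * (\<Sum>b\<in>B. xb b * M b c))"
  proof -
    have t: "xb b * (N c b * Uc c + Lc c * M c b) = Uc c * (xb b * N b c) + Lc c * (xb b * M b c)" for b c
      using assms(2,3) by (simp add: algebra_simps)
    have "(\<Sum>b\<in>B. xb b * - (\<Sum>c\<in>B. N c b * Uc c + Lc c * M c b))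
       = - (\<Sum>b\<in>B. \<Sum>c\<in>B. xb b * (N c b * Uc c + Lc c * M c b))"
      by (simp only: mult_minus_right sum_negf sum_distrib_left)
    also have "\<dots> = - (\<Sum>b\<in>B. \<Sum>c\<in>B. Uc c * (xb b * N b c) + Lc c * (xb b * M b c))"
      by (simp only: t)
    also have "\<dots> = - (\<Sum>c\<in>B. \<Sum>b\<in>B. Uc c * (xb b * N b c) + Lc c * (xb b * M b c))"
      by (subst sum.swap) (rule refl)
    also have "\<dots> = - (\<Sum>c\<in>B. Uc c * (\<Sum>b\<in>B. xb b * N b c) + Lc c * (\<Sum>b\<in>B. xb b * M b c))"
      by (simp only: sum.distrib sum_distrib_left)
    also have "\<dots> = - (\<Sum>c\<in>B. Uc c * (\<Sum>b\<in>B. xb b * N b c)) - (\<Sum>c\<in>B. Lc c * (\<Sum>b\<in>B. xb b * M b c))"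
      by (simp add: sum.distrib)
    finally show ?thesis by simp
  qed
  have s2: "(\<Sum>c\<in>B. Uc c * (\<Sum>b\<in>B. xb b * N b c)) = - (\<Sum>c\<in>B. Lc c * Uc c)"
  proof -
    have "(\<Sum>c\<in>B. Uc c * (\<Sum>b\<in>B. xb b * N b c)) = (\<Sum>c\<in>B. - (Lc c * Uc c))"
    proof (rule sum.cong[OF refl])
      fix c assume c: "c \<in> B"
      have "Lc c + (\<Sum>b\<in>B. xb b * N b c) = 0" using assms(4) c by blast
      then have "(\<Sum>b\<in>B. xb b * N b c) = - Lc c" by linarith
      then show "Uc c * (\<Sum>b\<in>B. xb b * N b c) = - (Lc c * Uc c)" by simp
    qed
    then show ?thesis by (simp add: sum_negf)
  qed
  have s3: "(\<Sum>c\<in>B. Lc c * (Uc c + (\<Sum>b\<in>B. xb b * M b c)))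
     = (\<Sum>c\<in>B. Lc c * Uc c) + (\<Sum>c\<in>B. Lc c * (\<Sum>b\<in>B. xb b * M b c))"
    by (simp add: distrib_left sum.distrib)
  show ?thesis using s1 s2 s3 assms(5) by linarith
qed



lemma dd_plus:
  assumes "p differentiable (at x)" "q differentiable (at x)"
  shows "dd (\<lambda>y. p y + q y) v x = dd p v x + dd q v x"
  using dd_unique[OF has_derivative_add[OF dd_deriv[OF assms(1)] dd_deriv[OF assms(2)]]] .

lemma dd_sum:
  assumes "finite I" "\<forall>i\<in>I. F i differentiable (at x)"
  shows "dd (\<lambda>y. \<Sum>i\<in>I. F i y) v x = (\<Sum>i\<in>I. dd (F i) v x)"
proof -
  have "((\<lambda>y. \<Sum>i\<in>I. F i y) has_derivative (\<lambda>v. \<Sum>i\<in>I. dd (F i) v x)) (at x)"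
    using assms(2) by (intro has_derivative_sum) (simp add: dd_deriv)
  from dd_unique[OF this] show ?thesis .
qed

theorem corollary4p2:
  fixes \<Sigma> \<Omega> :: "'a::euclidean_space set"
    and f u :: "'a \<Rightarrow> real" and \<alpha> c :: real
    and Du :: "'a \<Rightarrow> 'a"
  assumes dim: "DIM('a) \<ge> 2"
    and cone: "open_cone \<Sigma>"
    and cone_smooth: "smooth_submanifold (DIM('a) - 1) (frontier \<Sigma> - {0})"
    and sector: "sector_like \<Sigma> \<Omega>"
    and f_smooth: "smooth_on (UNIV - {0}) f"
    and f_pos: "\<forall>x. x \<noteq> 0 \<longrightarrow> f x > 0"
    and f_hom: "homogeneous_on (UNIV - {0}) \<alpha> f"
    and alpha_pos: "\<alpha> > 0"
    and u_reg: "Ck_on 3 \<Omega> u"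
    and u_cont: "continuous_on (closure \<Omega> - {0}) u"
    and Du_cont: "continuous_on (closure \<Omega> - {0}) Du"
    and Du_grad: "\<forall>x\<in>\<Omega>. Du x = grad u x"
    and eq: "\<forall>x\<in>\<Omega>. drift_lap f u x = -1"
    and bc_dir: "\<forall>p\<in>Gam \<Sigma> \<Omega>. u p = 0"
    and bc_neu: "\<forall>p\<in>Gam \<Sigma> \<Omega>. \<forall>\<nu>. outward_normal \<Omega> p \<nu> \<longrightarrow> Du p \<bullet> \<nu> = - c"
    and bc_neu1: "\<forall>p\<in>Gam1 \<Sigma> \<Omega> - {0}. \<forall>\<nu>. outward_normal \<Omega> p \<nu> \<longrightarrow> Du p \<bullet> \<nu> = 0"
    and hess_cond: "\<forall>x\<in>\<Omega>. hess (\<lambda>y. ln (f y)) x (grad u x) (grad u x)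
                        + (grad (\<lambda>y. ln (f y)) x \<bullet> grad u x)\<^sup>2 / \<alpha> \<le> 0"
  shows "\<forall>x\<in>\<Omega>. drift_lap f (\<lambda>y. y \<bullet> grad u y) x = -2"
proof
  have opO: "open \<Omega>" and OS: "\<Omega> \<subseteq> \<Sigma>" using sector unfolding sector_like_def by auto
  have "0 \<notin> \<Sigma>" using cone unfolding open_cone_def by auto
  then have O0: "0 \<notin> \<Omega>" using OS by blast
  have u1: "\<forall>y\<in>\<Omega>. u differentiable (at y)"
    and u2: "\<forall>v. \<forall>y\<in>\<Omega>. dd u v differentiable (at y)"
    and u3: "\<forall>v w. \<forall>y\<in>\<Omega>. dd (dd u v) w differentiable (at y)"
    using u_reg by (simp_all add: numeral_3_eq_3)
  define S0 where "S0 = (UNIV - {0::'a})"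
  have opS0: "open S0" unfolding S0_def by (simp add: open_delete)
  have f2: "Ck_on 2 S0 f" using f_smooth unfolding smooth_on_def S0_def by blast
  have f1: "\<forall>y\<in>S0. f differentiable (at y)"
    and f2: "\<forall>v. \<forall>y\<in>S0. dd f v differentiable (at y)"
    using f2 by (simp_all add: numeral_2_eq_2)
  define L where "L = (\<lambda>y. ln (f y))"
  have fpos: "f y > 0" if "y \<in> S0" for y using f_pos that unfolding S0_def by auto
  have Lder: "(L has_derivative (\<lambda>v. dd f v y * inverse (f y))) (at y)" if y: "y \<in> S0" for y
  proof -
    have "f differentiable (at y)" using f1 y by blast
    from has_derivative_ln[of f y, OF fpos[OF y] dd_deriv[OF this]] show ?thesis unfolding L_def .
  qed
  have L1: "\<forall>y\<in>S0. L differentiable (at y)" using Lder unfolding differentiable_def by blast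
  have Lv: "dd L v y = dd f v y / f y" if "y \<in> S0" for v y
    using dd_unique[OF Lder[OF that]] by (simp add: divide_inverse)
  have L2: "\<forall>v. \<forall>y\<in>S0. dd L v differentiable (at y)"
  proof (intro allI ballI)
    fix v y assume y: "y \<in> S0"
    have a: "dd f v differentiable (at y)" using f2 y by blast
    have b: "f differentiable (at y)" using f1 y by blast
    have "f y \<noteq> 0" using fpos[OF y] by simp
    from has_derivative_divide[OF dd_deriv[OF a] dd_deriv[OF b] this]
    have "(\<lambda>z. dd f v z / f z) differentiable (at y)" unfolding differentiable_def by blast
    then show "dd L v differentiable (at y)"
      by (rule differentiable_local[OF opS0 y, rotated]) (simp add: Lv)
  qed
  have Hom: "(\<Sum>b\<in>Basis. (y \<bullet> b) * dd L b y) = \<alpha>" if y: "y \<in> S0" for y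
  proof -
    have "(\<Sum>b\<in>Basis. (y \<bullet> b) * dd f b y) = \<alpha> * f y"
      using f_hom y unfolding homogeneous_on_def S0_def
      by (metis inner_commute inner_grad_Basis)
    then have "(\<Sum>b\<in>Basis. (y \<bullet> b) * dd f b y) / f y = \<alpha>" using fpos[OF y] by simp
    then show ?thesis using Lv[OF y] by (simp add: sum_divide_distrib)
  qed
  fix x assume x: "x \<in> \<Omega>"
  have xS0: "x \<in> S0" using x O0 unfolding S0_def by auto
  have HomD: "dd L k x + (\<Sum>b\<in>Basis. (x \<bullet> b) * dd (dd L b) k x) = 0" if k: "k \<in> Basis" for k
  proof -
    have "dd (\<lambda>y. \<Sum>b\<in>Basis. (y \<bullet> b) * dd L b y) k x = dd (\<lambda>y. \<alpha>) k x"
      by (rule dd_local[OF opS0 xS0]) (simp add: Hom)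
    also have "\<dots> = 0" by (rule dd_unique) (rule has_derivative_const)
    finally show ?thesis using radial_dd[of "\<lambda>b. dd L b" x k] L2 xS0 k by simp
  qed
  have SL: "dd (dd L b) k x = dd (dd L k) b x" for b k
    by (rule schwarz[OF opS0 xS0]) (use L1 L2 xS0 in auto)
  have SU: "dd (dd u b) k y = dd (dd u k) b y" if "y \<in> \<Omega>" for b k y
    by (rule schwarz[OF opO that]) (use u1 u2 that in auto)
  have SU3: "dd (dd (dd u b) k) k x = dd (dd (dd u k) k) b x" for b k
  proof -
    have "dd (dd (dd u b) k) k x = dd (dd (dd u k) b) k x"
      by (rule dd_local[OF opO x]) (simp add: SU)
    also have "\<dots> = dd (dd (dd u k) k) b x"
      by (rule schwarz[OF opO x]) (use u2 u3 x in auto)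
    finally show ?thesis .
  qed
  define g where "g = (\<lambda>y::'a. y \<bullet> grad u y)"
  have g_alt: "g = (\<lambda>y. \<Sum>b\<in>Basis. (y \<bullet> b) * dd u b y)"
    unfolding g_def by (simp add: inner_grad_Basis)
  have dg: "dd g k y = dd u k y + (\<Sum>b\<in>Basis. (y \<bullet> b) * dd (dd u b) k y)"
    if "k \<in> Basis" "y \<in> \<Omega>" for k y
    unfolding g_alt by (rule radial_dd) (use u2 that in auto)
  have ddg: "dd (dd g k) k x = 2 * dd (dd u k) k x + (\<Sum>b\<in>Basis. (x \<bullet> b) * dd (dd (dd u b) k) k x)"
    if k: "k \<in> Basis" for k
  proof -
    have "dd (dd g k) k x = dd (\<lambda>y. dd u k y + (\<Sum>b\<in>Basis. (y \<bullet> b) * dd (dd u b) k y)) k x"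
      by (rule dd_local[OF opO x]) (simp add: dg k)
    also have "\<dots> = dd (dd u k) k x + dd (\<lambda>y. \<Sum>b\<in>Basis. (y \<bullet> b) * dd (dd u b) k y) k x"
    proof (rule dd_plus)
      show "dd u k differentiable (at x)" using u2 x by blast
      show "(\<lambda>y. \<Sum>b\<in>Basis. (y \<bullet> b) * dd (dd u b) k y) differentiable (at x)"
        using radial_hasderiv[of "\<lambda>b. dd (dd u b) k" x] u3 x unfolding differentiable_def by blast
    qed
    also have "dd (\<lambda>y. \<Sum>b\<in>Basis. (y \<bullet> b) * dd (dd u b) k y) k x
       = dd (dd u k) k x + (\<Sum>b\<in>Basis. (x \<bullet> b) * dd (dd (dd u b) k) k x)"
      by (rule radial_dd) (use u3 x k in auto)
    finally show ?thesis by simp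
  qed
  define lapu where "lapu = lap u x"
  have lap_alt: "lap h = (\<lambda>y. \<Sum>k\<in>Basis. dd (dd h k) k y)" for h :: "'a \<Rightarrow> real"
    unfolding lap_def hess_def by simp
  have lapu_on: "lap u y = -1 - (\<Sum>k\<in>Basis. dd L k y * dd u k y)" if "y \<in> \<Omega>" for y
    using eq that unfolding drift_lap_def L_def[symmetric] grad_inner_grad by force
  have D3: "(\<Sum>k\<in>Basis. dd (dd (dd u k) k) b x)
       = - (\<Sum>k\<in>Basis. dd (dd L k) b x * dd u k x + dd L k x * dd (dd u k) b x)" for b
  proof -
    have "(\<Sum>k\<in>Basis. dd (dd (dd u k) k) b x) = dd (lap u) b x"
      unfolding lap_alt by (rule dd_sum[symmetric]) (use u3 x in auto)
    also have "\<dots> = dd (\<lambda>y. -1 - (\<Sum>k\<in>Basis. dd L k y * dd u k y)) b x"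
      by (rule dd_local[OF opO x]) (simp add: lapu_on)
    also have "\<dots> = 0 - (\<Sum>k\<in>Basis. dd L k x * dd (dd u k) b x + dd (dd L k) b x * dd u k x)"
    proof (rule dd_unique, rule has_derivative_diff[OF has_derivative_const], rule has_derivative_sum)
      fix k :: 'a assume "k \<in> Basis"
      show "((\<lambda>y. dd L k y * dd u k y) has_derivative
              (\<lambda>a. dd L k x * dd (dd u k) a x + dd (dd L k) a x * dd u k x)) (at x)"
        by (rule has_derivative_mult[OF dd_deriv dd_deriv]) (use L2 u2 x xS0 in auto)
    qed
    finally show ?thesis by (simp add: add.commute)
  qed
  have lapg: "lap g x = 2 * lapu + (\<Sum>b\<in>Basis. (x \<bullet> b) * (\<Sum>k\<in>Basis. dd (dd (dd u k) k) b x))"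
  proof -
    have "lap g x = (\<Sum>k\<in>Basis. 2 * dd (dd u k) k x + (\<Sum>b\<in>Basis. (x \<bullet> b) * dd (dd (dd u k) k) b x))"
      unfolding lap_alt by (rule sum.cong[OF refl]) (simp add: ddg SU3)
    also have "\<dots> = 2 * (\<Sum>k\<in>Basis. dd (dd u k) k x) + (\<Sum>k\<in>Basis. \<Sum>b\<in>Basis. (x \<bullet> b) * dd (dd (dd u k) k) b x)"
      by (simp add: sum.distrib sum_distrib_left)
    also have "(\<Sum>k\<in>Basis. \<Sum>b\<in>Basis. (x \<bullet> b) * dd (dd (dd u k) k) b x)
        = (\<Sum>b\<in>Basis. \<Sum>k\<in>Basis. (x \<bullet> b) * dd (dd (dd u k) k) b x)"
      by (rule sum.swap)
    also have "\<dots> = (\<Sum>b\<in>Basis. (x \<bullet> b) * (\<Sum>k\<in>Basis. dd (dd (dd u k) k) b x))"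
      by (simp add: sum_distrib_left)
    finally show ?thesis unfolding lapu_def lap_alt by simp
  qed
  have gradterm: "grad L x \<bullet> grad g x = (\<Sum>k\<in>Basis. dd L k x * (dd u k x + (\<Sum>b\<in>Basis. (x \<bullet> b) * dd (dd u b) k x)))"
    unfolding grad_inner_grad by (rule sum.cong[OF refl]) (simp add: dg x)
  have du: "lapu + (\<Sum>k\<in>Basis. dd L k x * dd u k x) = -1"
    using lapu_on[OF x] unfolding lapu_def by simp
  have main: "(2 * lapu + (\<Sum>b\<in>Basis. (x \<bullet> b) * - (\<Sum>k\<in>Basis. dd (dd L k) b x * dd u k x + dd L k x * dd (dd u k) b x)))
     + (\<Sum>k\<in>Basis. dd L k x * (dd u k x + (\<Sum>b\<in>Basis. (x \<bullet> b) * dd (dd u b) k x))) = -2"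
    by (rule alg[where B=Basis and M="\<lambda>(b::'a) (k::'a). dd (dd u b) k x" and N="\<lambda>(b::'a) (k::'a). dd (dd L b) k x"])
       (use SU[OF x] SL HomD du in auto)
  have "drift_lap f g x = lap g x + grad L x \<bullet> grad g x"
    unfolding drift_lap_def L_def ..
  also have "\<dots> = -2" using main unfolding lapg gradterm D3 .
  finally show "drift_lap f (\<lambda>y. y \<bullet> grad u y) x = -2" unfolding g_def .
qed

end
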